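(* Let $\alpha\in(0,1)$, $\alpha+\gamma>0$, $a,b>0$, and set $\eta_1:=\frac a2-\sqrt{\frac{a^2}{4}-b}$, $\eta_2:=\frac a2+\sqrt{\frac{a^2}4-b}$. Consider solutions of $$\big(\mathcal{D}^{(\alpha,\gamma)}_t\big)^2f(t)+a\,\mathcal{D}^{(\alpha,\gamma)}_tf(t)+b f(t)=0,\qquad t>0,$$ of the form $f(t)=\sum_{n\ge0}f_nt^{(\alpha+\gamma)n}$. If $b\ne a^2/4$, every such solution is $$f(t)=K_1\operatorname{E}_{\alpha,1+\gamma/\alpha,\gamma/\alpha}(-\eta_1t^{\alpha+\gamma})+K_2\operatorname{E}_{\alpha,1+\gamma/\alpha,\gamma/\alpha}(-\eta_2t^{\alpha+\gamma}),$$ with $K_1,K_2$ real if $a^2/4>b$, and complex with $K_1=\overline{K_2}$ if $a^2/4<b$ (for real $f$). If $b=a^2/4$, every such solution is $$f(t)=K_1'\operatorname{E}_{\alpha,1+\gamma/\alpha,\gamma/\alpha}(-(a/2)t^{\alpha+\gamma})+K_2'\,t^{\alpha+\gamma}\operatorname{E}^{(1)}_{\alpha,1+\gamma/\alpha,\gamma/\alpha}(-(a/2)t^{\alpha+\gamma}),$$ with $K_1',K_2'$ real constants.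
   Context: Caputo derivative for $0<\alpha<1$ and absolutely continuous $f$: ${}^C\!D^{(\alpha)}_tf(t)=\frac1{\Gamma(1-\alpha)}\int_0^t\frac{f'(\tau)}{(t-\tau)^\alpha}d\tau$. Stretched operator: $\mathcal{D}^{(\alpha,\gamma)}_t:=t^{-\gamma}\,{}^C\!D^{(\alpha)}_t$; $(\mathcal{D}^{(\alpha,\gamma)}_t)^2$ denotes its sequential (two-fold) application. In particular $\mathcal{D}^{(\alpha,\gamma)}_tt^\beta=\frac{\Gamma(\beta+1)}{\Gamma(\beta-\alpha+1)}t^{\beta-\alpha-\gamma}$ for $\beta\neq0$ and $\mathcal{D}^{(\alpha,\gamma)}_t1=0$. Kilbas–Saigo function: $\operatorname{E}_{a,m,l}(z)=1+\sum_{n\ge1}\prod_{k=1}^n\frac{\Gamma(1+a((k-1)m+l))}{\Gamma(1+a((k-1)m+l+1))}z^n$; $\operatorname{E}^{(1)}_{a,m,l}$ is its first derivative. *)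

theory Defs
  imports "HOL-Analysis.Analysis"
begin

definition caputo :: "real \<Rightarrow> (real \<Rightarrow> real) \<Rightarrow> real \<Rightarrow> real" where
  "caputo \<alpha> f t = 1 / Gamma (1 - \<alpha>) * integral {0..t} (\<lambda>\<tau>. deriv f \<tau> / (t - \<tau>) powr \<alpha>)"

definition stretched :: "real \<Rightarrow> real \<Rightarrow> (real \<Rightarrow> real) \<Rightarrow> real \<Rightarrow> real" where
  "stretched \<alpha> \<gamma> f t = t powr (-\<gamma>) * caputo \<alpha> f t"

definition ks_coeff :: "real \<Rightarrow> real \<Rightarrow> real \<Rightarrow> nat \<Rightarrow> real" where
  "ks_coeff a m l n =
     (\<Prod>k=1..n. Gamma (1 + a * ((real k - 1) * m + l)) / Gamma (1 + a * ((real k - 1) * m + l + 1)))"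

definition kilbas_saigo :: "real \<Rightarrow> real \<Rightarrow> real \<Rightarrow> complex \<Rightarrow> complex" where
  "kilbas_saigo a m l z = (\<Sum>n. complex_of_real (ks_coeff a m l n) * z ^ n)"

definition kilbas_saigo_deriv :: "real \<Rightarrow> real \<Rightarrow> real \<Rightarrow> complex \<Rightarrow> complex" where
  "kilbas_saigo_deriv a m l z = deriv (kilbas_saigo a m l) z"

end

theory Submission imports Defs begin

lemma beta_scaled:
  fixes s \<alpha> t :: real
  assumes s: "s > 0" and a: "0 < \<alpha>" "\<alpha> < 1" and t: "t > 0"
  shows "((\<lambda>\<tau>. \<tau> powr (s-1) * (t-\<tau>) powr (-\<alpha>)) has_integral Beta s (1-\<alpha>) * t powr (s-\<alpha>)) {0..t}"
proof -
  define g where "g = (\<lambda>u::real. u powr (s - 1) * (1 - u) powr (1 - \<alpha> - 1))"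
  have B: "(g has_integral Beta s (1-\<alpha>)) {0..1}"
    unfolding g_def by (rule has_integral_Beta_real) (use s a in auto)
  have "((\<lambda>x. g ((1/t) * x)) has_integral (1 / \<bar>1/t\<bar>) *\<^sub>R Beta s (1-\<alpha>)) ((\<lambda>x. x / (1/t)) ` {0..1})"
    by (rule has_integral_stretch_real[OF B]) (use t in auto)
  moreover have "(\<lambda>x. x / (1/t)) ` {0..1} = {0..t}"
  proof -
    have "(\<lambda>x. x / (1/t)) = (*) t" by (auto simp: field_simps)
    then show ?thesis by (subst \<open>_ = (*) t\<close>) (use t in simp)
  qed
  ultimately have I: "((\<lambda>x. g (x/t)) has_integral t * Beta s (1-\<alpha>)) {0..t}"
    using t by simp
  have I2: "((\<lambda>x. t powr (s-1-\<alpha>) * g (x/t)) has_integral t powr (s-1-\<alpha>) * (t * Beta s (1-\<alpha>))) {0..t}"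
    by (rule has_integral_mult_right[OF I])
  have eq: "t powr (s-1-\<alpha>) * g (x/t) = x powr (s-1) * (t-x) powr (-\<alpha>)" if "x \<in> {0..t}" for x
  proof -
    have "g (x/t) = x powr (s-1) / t powr (s-1) * ((t-x) powr (-\<alpha>) / t powr (-\<alpha>))"
    proof -
      have "1 - x/t = (t-x)/t" using t by (simp add: field_simps)
      moreover have "((t-x)/t) powr (-\<alpha>) = (t-x) powr (-\<alpha>) / t powr (-\<alpha>)"
        using that t by (intro powr_divide; auto)
      moreover have "(x/t) powr (s-1) = x powr (s-1) / t powr (s-1)"
        using that t by (intro powr_divide; auto)
      ultimately show ?thesis unfolding g_def by simp
    qed
    moreover have "t powr (1+\<alpha>) = t * t powr \<alpha>" using t by (simp add: powr_add)
    ultimately show ?thesis using t by (simp add: powr_diff powr_minus field_simps)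
  qed
  have "t powr (s-1-\<alpha>) * (t * Beta s (1-\<alpha>)) = Beta s (1-\<alpha>) * t powr (s-\<alpha>)"
  proof -
    have "t powr (1+\<alpha>) = t * t powr \<alpha>" using t by (simp add: powr_add)
    then show ?thesis using t by (simp add: powr_diff field_simps)
  qed
  with I2 show ?thesis
    using has_integral_spike_finite_eq[of "{}" "{0..t}" "\<lambda>x. t powr (s-1-\<alpha>) * g (x/t)"] eq
    by (metis (no_types, lifting) has_integral_eq)
qed


definition psum :: "(nat \<Rightarrow> real) \<Rightarrow> real \<Rightarrow> real" where
  "psum c x = (\<Sum>n. c n * x ^ n)"

definition Cg :: "real \<Rightarrow> real \<Rightarrow> nat \<Rightarrow> real" where
  "Cg \<alpha> \<beta> k = Gamma (\<beta> * real k + 1) / Gamma (\<beta> * real k + 1 - \<alpha>)"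

lemma psum_deriv_comp:
  assumes ent: "\<And>x. summable (\<lambda>n. c n * x ^ n)" and b: "\<beta> > 0"
    and fdef: "\<And>\<tau>. \<tau> > 0 \<Longrightarrow> f \<tau> = psum c (\<tau> powr \<beta>)" and tau: "\<tau> > 0"
  shows "deriv f \<tau> = psum (diffs c) (\<tau> powr \<beta>) * (\<beta> * \<tau> powr (\<beta> - 1))"
proof -
  have d: "(psum c has_real_derivative psum (diffs c) y) (at y)" for y
    unfolding psum_def[abs_def] by (rule termdiffs_strong_converges_everywhere[OF ent])
  have "((\<lambda>\<tau>. psum c (\<tau> powr \<beta>)) has_real_derivative psum (diffs c) (\<tau> powr \<beta>) * (\<beta> * \<tau> powr (\<beta> - 1))) (at \<tau>)"
    by (rule DERIV_chain2[OF d has_real_derivative_powr[OF tau]])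
  then have "(f has_real_derivative psum (diffs c) (\<tau> powr \<beta>) * (\<beta> * \<tau> powr (\<beta> - 1))) (at \<tau>)"
    by (rule has_field_derivative_transform_within_open[where S="{0<..}"]) (use tau fdef in auto)
  then show ?thesis by (rule DERIV_imp_deriv)
qed

lemma Cg_Beta:
  fixes \<alpha> x :: real
  assumes a: "0 < \<alpha>" "\<alpha> < 1" and x: "x > 0"
  shows "x * Beta x (1-\<alpha>) / Gamma (1-\<alpha>) = Gamma (x + 1) / Gamma (x + 1 - \<alpha>)"
proof -
  have "Gamma (1-\<alpha>) > 0" by (rule Gamma_real_pos) (use a in simp)
  moreover have "Gamma (x + 1) = x * Gamma x"
    by (rule Gamma_plus1) (use x in \<open>auto elim!: nonpos_Ints_cases\<close>)
  ultimately show ?thesis unfolding Beta_def by (simp add: algebra_simps)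
qed

lemma caputo_series:
  assumes a: "0 < \<alpha>" "\<alpha> < 1" and b: "\<beta> > 0"
    and ent: "\<And>x. summable (\<lambda>n. c n * x ^ n)"
    and fdef: "\<And>\<tau>. \<tau> > 0 \<Longrightarrow> f \<tau> = psum c (\<tau> powr \<beta>)" and t: "t > 0"
  shows "(\<lambda>n. c (Suc n) * Cg \<alpha> \<beta> (Suc n) * t powr (\<beta> * real (Suc n) - \<alpha>)) sums caputo \<alpha> f t"
proof -
  define g where "g = (\<lambda>n \<tau>. \<beta> * diffs c n * (\<tau> powr (\<beta> * real (Suc n) - 1) * (t - \<tau>) powr (-\<alpha>)))"
  define G where "G = (\<lambda>\<tau>. deriv f \<tau> / (t - \<tau>) powr \<alpha>)"
  define S where "S = {0<..<t}"
  have sdc: "summable (\<lambda>n. diffs c n * x ^ n)" for x by (rule termdiff_converges_all[OF ent])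
  have pw: "(\<tau> powr \<beta>) ^ n * \<tau> powr (\<beta> - 1) = \<tau> powr (\<beta> * real (Suc n) - 1)" if "\<tau> > 0" for \<tau> n
    using that by (simp add: powr_power powr_add[symmetric] algebra_simps)
  have gsum: "(\<lambda>n. g n \<tau>) sums G \<tau>" if "\<tau> \<in> S" for \<tau>
  proof -
    from that have tau: "\<tau> > 0" "\<tau> < t" by (auto simp: S_def)
    have "(\<lambda>n. diffs c n * (\<tau> powr \<beta>) ^ n) sums psum (diffs c) (\<tau> powr \<beta>)"
      unfolding psum_def using sdc by (rule summable_sums)
    then have "(\<lambda>n. diffs c n * (\<tau> powr \<beta>) ^ n * (\<beta> * \<tau> powr (\<beta> - 1) * (t - \<tau>) powr (-\<alpha>)))
        sums (psum (diffs c) (\<tau> powr \<beta>) * (\<beta> * \<tau> powr (\<beta> - 1) * (t - \<tau>) powr (-\<alpha>)))"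
      by (rule sums_mult2)
    moreover have "G \<tau> = psum (diffs c) (\<tau> powr \<beta>) * (\<beta> * \<tau> powr (\<beta> - 1) * (t - \<tau>) powr (-\<alpha>))"
      unfolding G_def using psum_deriv_comp[OF ent b fdef tau(1)] tau
      by (simp add: powr_minus divide_inverse)
    moreover have "diffs c n * (\<tau> powr \<beta>) ^ n * (\<beta> * \<tau> powr (\<beta> - 1) * (t - \<tau>) powr (-\<alpha>)) = g n \<tau>" for n
      unfolding g_def using pw[OF tau(1), of n] by (simp add: algebra_simps)
    ultimately show ?thesis by simp
  qed
  have gint: "(g n has_integral \<beta> * diffs c n * (Beta (\<beta> * real (Suc n)) (1-\<alpha>) * t powr (\<beta> * real (Suc n) - \<alpha>))) S" for n
  proof -
    have "((\<lambda>\<tau>. \<tau> powr (\<beta> * real (Suc n) - 1) * (t-\<tau>) powr (-\<alpha>)) has_integral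
          Beta (\<beta> * real (Suc n)) (1-\<alpha>) * t powr (\<beta> * real (Suc n) - \<alpha>)) {0..t}"
      by (rule beta_scaled) (use a b t in auto)
    then show ?thesis unfolding g_def S_def has_integral_Icc_iff_Ioo
      by (rule has_integral_mult_right)
  qed
  define M where "M = \<beta> * (\<Sum>n. \<bar>diffs c n\<bar> * (t powr \<beta>) ^ n)"
  define h where "h = (\<lambda>\<tau>. M * (\<tau> powr (\<beta> - 1) * (t - \<tau>) powr (-\<alpha>)))"
  have hint: "h integrable_on S"
  proof -
    have "((\<lambda>\<tau>. \<tau> powr (\<beta> - 1) * (t-\<tau>) powr (-\<alpha>)) has_integral
          Beta \<beta> (1-\<alpha>) * t powr (\<beta> - \<alpha>)) {0..t}"
      by (rule beta_scaled) (use a b t in auto)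
    then have "(h has_integral M * (Beta \<beta> (1-\<alpha>) * t powr (\<beta> - \<alpha>))) S"
      unfolding h_def S_def has_integral_Icc_iff_Ioo by (rule has_integral_mult_right)
    then show ?thesis by (auto simp: integrable_on_def)
  qed
  have sabs: "summable (\<lambda>n. \<bar>diffs c n\<bar> * (t powr \<beta>) ^ n)"
  proof -
    have "summable (\<lambda>n. norm (diffs c n * (t powr \<beta>) ^ n))"
      by (rule powser_insidea[OF sdc[of "t powr \<beta> + 1"]]) auto
    then show ?thesis by (simp add: abs_mult)
  qed
  have le: "norm (\<Sum>n<k. g n \<tau>) \<le> h \<tau>" if "\<tau> \<in> S" for k \<tau>
  proof -
    from that have tau: "\<tau> > 0" "\<tau> < t" by (auto simp: S_def)
    define w where "w = \<tau> powr (\<beta> - 1) * (t - \<tau>) powr (-\<alpha>)"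
    have w: "w \<ge> 0" unfolding w_def by simp
    have gn: "\<bar>g n \<tau>\<bar> \<le> \<beta> * (\<bar>diffs c n\<bar> * (t powr \<beta>) ^ n) * w" for n
    proof -
      have "g n \<tau> = \<beta> * diffs c n * (\<tau> powr \<beta>) ^ n * w"
        unfolding g_def w_def using pw[OF tau(1), of n] by (simp add: algebra_simps)
      moreover have "(\<tau> powr \<beta>) ^ n \<le> (t powr \<beta>) ^ n"
        using tau b by (intro power_mono powr_mono2) auto
      ultimately show ?thesis using b w
        by (simp add: abs_mult mult_left_mono mult_right_mono)
    qed
    have "norm (\<Sum>n<k. g n \<tau>) \<le> (\<Sum>n<k. \<bar>g n \<tau>\<bar>)"
      by (simp add: sum_abs)
    also have "\<dots> \<le> (\<Sum>n<k. \<beta> * (\<bar>diffs c n\<bar> * (t powr \<beta>) ^ n) * w)"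
      by (intro sum_mono gn)
    also have "\<dots> = \<beta> * (\<Sum>n<k. \<bar>diffs c n\<bar> * (t powr \<beta>) ^ n) * w"
      by (simp add: sum_distrib_left sum_distrib_right)
    also have "\<dots> \<le> M * w"
      unfolding M_def using b w
      by (intro mult_right_mono mult_left_mono sum_le_suminf[OF sabs]) auto
    finally show ?thesis unfolding h_def w_def .
  qed
  have DC: "(\<lambda>k. integral S (\<lambda>\<tau>. \<Sum>n<k. g n \<tau>)) \<longlonglongrightarrow> integral S G"
    by (rule dominated_convergence(2)[OF _ hint le])
       (use gint gsum in \<open>auto intro!: integrable_sum simp: sums_def integrable_on_def\<close>)
  have "integral S (\<lambda>\<tau>. \<Sum>n<k. g n \<tau>) = (\<Sum>n<k. \<beta> * diffs c n * (Beta (\<beta> * real (Suc n)) (1-\<alpha>) * t powr (\<beta> * real (Suc n) - \<alpha>)))" for k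
    using gint by (subst integral_sum) (auto simp: integrable_on_def intro!: sum.cong integral_unique)
  with DC have s1: "(\<lambda>n. \<beta> * diffs c n * (Beta (\<beta> * real (Suc n)) (1-\<alpha>) * t powr (\<beta> * real (Suc n) - \<alpha>))) sums integral S G"
    by (simp add: sums_def)
  have cap: "caputo \<alpha> f t = 1 / Gamma (1-\<alpha>) * integral S G"
    unfolding caputo_def G_def S_def by (simp add: integral_open_interval_real)
  have s2: "(\<lambda>n. 1 / Gamma (1-\<alpha>) * (\<beta> * diffs c n * (Beta (\<beta> * real (Suc n)) (1-\<alpha>) * t powr (\<beta> * real (Suc n) - \<alpha>)))) sums caputo \<alpha> f t"
    unfolding cap by (rule sums_mult[OF s1])
  have eqn: "1 / Gamma (1-\<alpha>) * (\<beta> * diffs c n * (Beta (\<beta> * real (Suc n)) (1-\<alpha>) * t powr (\<beta> * real (Suc n) - \<alpha>)))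
     = c (Suc n) * Cg \<alpha> \<beta> (Suc n) * t powr (\<beta> * real (Suc n) - \<alpha>)" for n
  proof -
    have E: "\<beta> * real (Suc n) * Beta (\<beta> * real (Suc n)) (1-\<alpha>) / Gamma (1-\<alpha>) = Cg \<alpha> \<beta> (Suc n)"
      unfolding Cg_def by (rule Cg_Beta) (use a b in auto)
    show ?thesis unfolding diffs_def E[symmetric] by (simp del: of_nat_Suc add: field_simps)
  qed
  show ?thesis using s2 unfolding eqn .
qed



lemma entire_from_pos:
  fixes c :: "nat \<Rightarrow> real"
  assumes "\<And>x. x > 0 \<Longrightarrow> summable (\<lambda>n. c n * x ^ n)"
  shows "summable (\<lambda>n. c n * y ^ n)"
  by (rule powser_inside[OF assms[of "\<bar>y\<bar> + 1"]]) auto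

lemma stretched_series:
  assumes a: "0 < \<alpha>" "\<alpha> < 1" and b: "\<alpha> + \<gamma> > 0"
    and ent: "\<And>x. summable (\<lambda>n. c n * x ^ n)"
    and fdef: "\<And>\<tau>. \<tau> > 0 \<Longrightarrow> f \<tau> = psum c (\<tau> powr (\<alpha> + \<gamma>))" and t: "t > 0"
  shows "(\<lambda>n. c (Suc n) * Cg \<alpha> (\<alpha> + \<gamma>) (Suc n) * (t powr (\<alpha> + \<gamma>)) ^ n) sums stretched \<alpha> \<gamma> f t"
proof -
  have s: "(\<lambda>n. c (Suc n) * Cg \<alpha> (\<alpha> + \<gamma>) (Suc n) * t powr ((\<alpha> + \<gamma>) * real (Suc n) - \<alpha>)) sums caputo \<alpha> f t"
    by (rule caputo_series[OF a b ent fdef t])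
  have "(\<lambda>n. t powr (-\<gamma>) * (c (Suc n) * Cg \<alpha> (\<alpha> + \<gamma>) (Suc n) * t powr ((\<alpha> + \<gamma>) * real (Suc n) - \<alpha>))) sums stretched \<alpha> \<gamma> f t"
    unfolding stretched_def by (rule sums_mult[OF s])
  moreover have eq: "t powr (-\<gamma>) * (c (Suc n) * Cg \<alpha> (\<alpha> + \<gamma>) (Suc n) * t powr ((\<alpha> + \<gamma>) * real (Suc n) - \<alpha>))
      = c (Suc n) * Cg \<alpha> (\<alpha> + \<gamma>) (Suc n) * (t powr (\<alpha> + \<gamma>)) ^ n" for n
  proof -
    have "t powr (-\<gamma>) * t powr ((\<alpha> + \<gamma>) * real (Suc n) - \<alpha>) = t powr (real n * (\<alpha> + \<gamma>))"
      by (simp add: powr_add[symmetric] algebra_simps)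
    then show ?thesis using t by (simp add: powr_power)
  qed
  ultimately show ?thesis by (simp only: eq)
qed

lemma stretched_psum:
  assumes a: "0 < \<alpha>" "\<alpha> < 1" and b: "\<alpha> + \<gamma> > 0"
    and ent: "\<And>x. summable (\<lambda>n. c n * x ^ n)"
    and fdef: "\<And>\<tau>. \<tau> > 0 \<Longrightarrow> f \<tau> = psum c (\<tau> powr (\<alpha> + \<gamma>))"
  shows "\<And>x. summable (\<lambda>n. (c (Suc n) * Cg \<alpha> (\<alpha> + \<gamma>) (Suc n)) * x ^ n)"
    and "\<And>t. t > 0 \<Longrightarrow> stretched \<alpha> \<gamma> f t = psum (\<lambda>n. c (Suc n) * Cg \<alpha> (\<alpha> + \<gamma>) (Suc n)) (t powr (\<alpha> + \<gamma>))"
proof -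
  show "stretched \<alpha> \<gamma> f t = psum (\<lambda>n. c (Suc n) * Cg \<alpha> (\<alpha> + \<gamma>) (Suc n)) (t powr (\<alpha> + \<gamma>))" if "t > 0" for t
    unfolding psum_def using sums_unique[OF stretched_series[OF a b ent fdef that]] by simp
  show "summable (\<lambda>n. (c (Suc n) * Cg \<alpha> (\<alpha> + \<gamma>) (Suc n)) * x ^ n)" for x
  proof (rule entire_from_pos)
    fix y :: real assume y: "y > 0"
    define t where "t = y powr (1 / (\<alpha> + \<gamma>))"
    have "t > 0" using y by (simp add: t_def)
    moreover have "t powr (\<alpha> + \<gamma>) = y" using y b by (simp add: t_def powr_powr)
    ultimately show "summable (\<lambda>n. (c (Suc n) * Cg \<alpha> (\<alpha> + \<gamma>) (Suc n)) * y ^ n)"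
      using stretched_series[OF a b ent fdef \<open>t > 0\<close>] sums_summable by metis
  qed
qed

lemma powser_unique0:
  fixes c :: "nat \<Rightarrow> real"
  assumes ent: "\<And>x. summable (\<lambda>n. c n * x ^ n)" and z: "\<And>x. x > 0 \<Longrightarrow> psum c x = 0"
  shows "c 0 = 0"
proof -
  have "(psum c has_real_derivative psum (diffs c) 0) (at 0)"
    unfolding psum_def[abs_def] by (rule termdiffs_strong_converges_everywhere[OF ent])
  then have "isCont (psum c) 0" by (rule DERIV_isCont)
  then have "(psum c \<longlongrightarrow> psum c 0) (at_right 0)"
    by (simp add: isCont_def filterlim_at_split)
  moreover have "eventually (\<lambda>x. psum c x = 0) (at_right (0::real))"
    using z by (intro eventually_at_rightI[of 0 1]) auto
  ultimately have "((\<lambda>_. 0) \<longlongrightarrow> psum c 0) (at_right (0::real))"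
    using tendsto_cong[of "psum c" "\<lambda>_. 0" "at_right (0::real)" "psum c 0"] by simp
  then have "psum c 0 = 0"
    using tendsto_unique[OF trivial_limit_at_right_real] tendsto_const by metis
  then show ?thesis by (simp add: psum_def)
qed

lemma powser_unique:
  fixes c :: "nat \<Rightarrow> real"
  assumes "\<And>x. summable (\<lambda>n. c n * x ^ n)" and "\<And>x. x > 0 \<Longrightarrow> psum c x = 0"
  shows "c n = 0"
  using assms
proof (induction n arbitrary: c)
  case 0
  then show ?case by (rule powser_unique0)
next
  case (Suc n)
  have c0: "c 0 = 0" using Suc.prems by (rule powser_unique0)
  show ?case
  proof (rule Suc.IH[of "\<lambda>n. c (Suc n)", simplified])
    show "summable (\<lambda>n. c (Suc n) * x ^ n)" for x
      using Suc.prems(1) by (subst summable_powser_split_head)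
    show "psum (\<lambda>n. c (Suc n)) x = 0" if "x > 0" for x
      using powser_split_head(1)[OF Suc.prems(1)[of x]] Suc.prems(2)[OF that] c0 that
      by (simp add: psum_def)
  qed
qed



lemma Cg_pos:
  assumes "0 < \<alpha>" "\<alpha> < 1" "\<beta> > 0"
  shows "Cg \<alpha> \<beta> k > 0"
proof -
  have "\<beta> * real k \<ge> 0" using assms by simp
  then show ?thesis unfolding Cg_def using assms by (intro divide_pos_pos Gamma_real_pos) linarith+
qed

lemma Gamma_ratio_lower:
  fixes \<alpha> x :: real
  assumes a: "0 < \<alpha>" "\<alpha> < 1" and x: "x > 0"
  shows "x powr \<alpha> \<le> Gamma (x + 1) / Gamma (x + 1 - \<alpha>)"
proof -
  have cv: "(ln \<circ> Gamma) ((1 - (1-\<alpha>)) *\<^sub>R x + (1-\<alpha>) *\<^sub>R (x+1)) \<le> (1 - (1-\<alpha>)) * (ln \<circ> Gamma) x + (1-\<alpha>) * (ln \<circ> Gamma) (x+1)"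
    by (rule convex_onD[OF log_convex_Gamma_real]) (use a x in auto)
  have e1: "(1 - (1-\<alpha>)) *\<^sub>R x + (1-\<alpha>) *\<^sub>R (x+1) = x + 1 - \<alpha>" by (simp add: algebra_simps)
  have gx: "Gamma x > 0" using x by simp
  have g1: "Gamma (x + 1) = x * Gamma x"
    by (rule Gamma_plus1) (use x in \<open>auto elim!: nonpos_Ints_cases\<close>)
  have gx1: "Gamma (x+1) > 0" using x by simp
  have gxa: "Gamma (x+1-\<alpha>) > 0" using x a by simp
  have "ln (x * Gamma x) = ln x + ln (Gamma x)" using x gx by (rule ln_mult_pos)
  then have "ln (Gamma (x+1)) = ln x + ln (Gamma x)" using g1 by simp
  then have "ln (Gamma x) = ln (Gamma (x+1)) - ln x" by simp
  with cv e1 have "ln (Gamma (x + 1 - \<alpha>)) \<le> ln (Gamma (x+1)) - \<alpha> * ln x"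
    by (simp add: algebra_simps)
  also have "\<dots> = ln (Gamma (x+1) / x powr \<alpha>)" using ln_div[of "Gamma (x+1)" "x powr \<alpha>"] gx1 x by (simp add: ln_powr)
  finally have "Gamma (x + 1 - \<alpha>) \<le> Gamma (x+1) / x powr \<alpha>"
    using gxa gx1 x by (subst (asm) ln_le_cancel_iff) auto
  then show ?thesis using gxa x by (simp add: field_simps)
qed

definition ksr :: "real \<Rightarrow> real \<Rightarrow> nat \<Rightarrow> real" where
  "ksr \<alpha> \<beta> n = 1 / (\<Prod>k=1..n. Cg \<alpha> \<beta> k)"

lemma ksr_Suc: "ksr \<alpha> \<beta> (Suc n) = ksr \<alpha> \<beta> n / Cg \<alpha> \<beta> (Suc n)"
  unfolding ksr_def by (simp add: prod.cl_ivl_Suc)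

lemma ksr_0: "ksr \<alpha> \<beta> 0 = 1" unfolding ksr_def by simp

lemma ks_coeff_ksr:
  assumes "0 < \<alpha>"
  shows "ks_coeff \<alpha> (1 + \<gamma>/\<alpha>) (\<gamma>/\<alpha>) n = ksr \<alpha> (\<alpha> + \<gamma>) n"
proof -
  have "ks_coeff \<alpha> (1 + \<gamma>/\<alpha>) (\<gamma>/\<alpha>) n = (\<Prod>k=1..n. 1 / Cg \<alpha> (\<alpha> + \<gamma>) k)"
    unfolding ks_coeff_def
  proof (intro prod.cong refl)
    fix k assume "k \<in> {1..n}"
    have e1: "1 + \<alpha> * ((real k - 1) * (1 + \<gamma>/\<alpha>) + \<gamma>/\<alpha>) = (\<alpha> + \<gamma>) * real k + 1 - \<alpha>"
      using assms by (simp add: field_simps)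
    have e2: "1 + \<alpha> * ((real k - 1) * (1 + \<gamma>/\<alpha>) + \<gamma>/\<alpha> + 1) = (\<alpha> + \<gamma>) * real k + 1"
      using assms by (simp add: field_simps)
    show "Gamma (1 + \<alpha> * ((real k - 1) * (1 + \<gamma>/\<alpha>) + \<gamma>/\<alpha>)) / Gamma (1 + \<alpha> * ((real k - 1) * (1 + \<gamma>/\<alpha>) + \<gamma>/\<alpha> + 1))
        = 1 / Cg \<alpha> (\<alpha> + \<gamma>) k"
      unfolding e1 e2 Cg_def by simp
  qed
  then show ?thesis unfolding ksr_def by (simp add: prod_dividef)
qed

lemma ksr_entire:
  assumes a: "0 < \<alpha>" "\<alpha> < 1" and b: "\<beta> > 0"
  shows "summable (\<lambda>n. complex_of_real (ksr \<alpha> \<beta> n) * z ^ n)"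
proof (rule summable_ratio_test[of "1/2"])
  define R where "R = (2 * norm z + 1) powr (1/\<alpha>)"
  define N where "N = nat \<lceil>R / \<beta>\<rceil>"
  show "norm (complex_of_real (ksr \<alpha> \<beta> (Suc n)) * z ^ Suc n) \<le> 1/2 * norm (complex_of_real (ksr \<alpha> \<beta> n) * z ^ n)"
    if n: "n \<ge> N" for n
  proof -
    have zp: "2 * norm z + 1 > 0" using norm_ge_zero[of z] by linarith
    then have Rp: "R > 0" unfolding R_def by simp
    have "real N \<ge> R / \<beta>" unfolding N_def by linarith
    then have "\<beta> * real (Suc n) \<ge> R" using n b by (simp add: field_simps) (smt (verit) mult_left_mono of_nat_mono)
    then have "(\<beta> * real (Suc n)) powr \<alpha> \<ge> R powr \<alpha>" using Rp a by (intro powr_mono2) auto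
    moreover have "R powr \<alpha> = 2 * norm z + 1"
    proof -
      have "2 * norm z + 1 > 0" using norm_ge_zero[of z] by linarith
      then show ?thesis unfolding R_def using a by (simp add: powr_powr)
    qed
    moreover have "(\<beta> * real (Suc n)) powr \<alpha> \<le> Cg \<alpha> \<beta> (Suc n)"
      unfolding Cg_def by (rule Gamma_ratio_lower) (use a b in auto)
    ultimately have C: "Cg \<alpha> \<beta> (Suc n) \<ge> 2 * norm z + 1" by linarith
    have kp: "ksr \<alpha> \<beta> n \<ge> 0" unfolding ksr_def using Cg_pos[OF a b] by (simp add: prod_nonneg less_imp_le)
    have "norm (complex_of_real (ksr \<alpha> \<beta> (Suc n)) * z ^ Suc n) = ksr \<alpha> \<beta> n * norm z / Cg \<alpha> \<beta> (Suc n) * norm z ^ n"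
      using kp Cg_pos[OF a b, of "Suc n"] by (simp add: ksr_Suc norm_mult norm_power norm_divide)
    also have "\<dots> \<le> ksr \<alpha> \<beta> n * (1/2) * norm z ^ n"
    proof -
      have "norm z / Cg \<alpha> \<beta> (Suc n) \<le> 1/2" using C Cg_pos[OF a b, of "Suc n"] by (simp add: field_simps)
      then have "ksr \<alpha> \<beta> n * (norm z / Cg \<alpha> \<beta> (Suc n)) * norm z ^ n \<le> ksr \<alpha> \<beta> n * (1/2) * norm z ^ n"
        using kp by (intro mult_left_mono mult_right_mono) auto
      then show ?thesis by (simp add: field_simps)
    qed
    also have "\<dots> = 1/2 * norm (complex_of_real (ksr \<alpha> \<beta> n) * z ^ n)"
      using kp by (simp add: norm_mult norm_power)
    finally show ?thesis .
  qed
qed simp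



lemma lin_rec_distinct:
  fixes v :: "nat \<Rightarrow> 'a::field" and A B l1 l2 :: 'a
  assumes rec: "\<And>n. v (Suc (Suc n)) + A * v (Suc n) + B * v n = 0"
    and s: "l1 + l2 = - A" and p: "l1 * l2 = B" and d: "l1 \<noteq> l2"
  shows "v n = (v 1 - l2 * v 0) / (l1 - l2) * l1 ^ n + (l1 * v 0 - v 1) / (l1 - l2) * l2 ^ n"
proof -
  define K1 where "K1 = (v 1 - l2 * v 0) / (l1 - l2)"
  define K2 where "K2 = (l1 * v 0 - v 1) / (l1 - l2)"
  have dd: "l1 - l2 \<noteq> 0" using d by simp
  have "v n = K1 * l1 ^ n + K2 * l2 ^ n \<and> v (Suc n) = K1 * l1 ^ Suc n + K2 * l2 ^ Suc n"
  proof (induction n)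
    case 0
    have "K1 + K2 = ((v 1 - l2 * v 0) + (l1 * v 0 - v 1)) / (l1 - l2)"
      unfolding K1_def K2_def by (simp only: add_divide_distrib times_divide_eq_left)
    also have "\<dots> = ((l1 - l2) * v 0) / (l1 - l2)" by (simp add: algebra_simps)
    also have "\<dots> = v 0" using dd by simp
    finally have e0: "K1 + K2 = v 0" .
    have "K1 * l1 + K2 * l2 = ((v 1 - l2 * v 0) * l1 + (l1 * v 0 - v 1) * l2) / (l1 - l2)"
      unfolding K1_def K2_def by (simp only: add_divide_distrib times_divide_eq_left)
    also have "\<dots> = ((l1 - l2) * v 1) / (l1 - l2)" by (simp add: algebra_simps)
    also have "\<dots> = v 1" using dd by simp
    finally have e1: "K1 * l1 + K2 * l2 = v 1" .
    show ?case using e0 e1 by simp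
  next
    case (Suc n)
    have "v (Suc (Suc n)) = - A * v (Suc n) - B * v n" using rec[of n]
      by (simp add: algebra_simps eq_neg_iff_add_eq_0)
    also have "\<dots> = (l1 + l2) * (K1 * l1 ^ Suc n + K2 * l2 ^ Suc n) - l1 * l2 * (K1 * l1 ^ n + K2 * l2 ^ n)"
      using Suc.IH s p by simp
    also have "\<dots> = K1 * l1 ^ Suc (Suc n) + K2 * l2 ^ Suc (Suc n)"
      by (simp add: algebra_simps)
    finally show ?case using Suc.IH by simp
  qed
  then show ?thesis unfolding K1_def K2_def by simp
qed

definition wseq :: "'a::comm_semiring_1 \<Rightarrow> nat \<Rightarrow> 'a" where
  "wseq l n = (case n of 0 \<Rightarrow> 0 | Suc m \<Rightarrow> of_nat (Suc m) * l ^ m)"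

lemma wseq_rec: "wseq l (Suc (Suc n)) = 2 * l * wseq l (Suc n) - l * l * wseq (l :: 'a::comm_ring_1) n"
  by (cases n) (simp_all add: wseq_def algebra_simps)

lemma lin_rec_double:
  fixes v :: "nat \<Rightarrow> 'a::field" and A B l :: 'a
  assumes rec: "\<And>n. v (Suc (Suc n)) + A * v (Suc n) + B * v n = 0"
    and s: "2 * l = - A" and p: "l * l = B"
  shows "v n = v 0 * l ^ n + (v 1 - l * v 0) * wseq l n"
proof -
  define K1 where "K1 = v 0"
  define K2 where "K2 = v 1 - l * v 0"
  have "v n = K1 * l ^ n + K2 * wseq l n \<and> v (Suc n) = K1 * l ^ Suc n + K2 * wseq l (Suc n)"
  proof (induction n)
    case 0
    show ?case unfolding K1_def K2_def by (simp add: wseq_def)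
  next
    case (Suc n)
    have "v (Suc (Suc n)) = - A * v (Suc n) - B * v n" using rec[of n]
      by (simp add: algebra_simps eq_neg_iff_add_eq_0)
    also have "\<dots> = 2 * l * (K1 * l ^ Suc n + K2 * wseq l (Suc n)) - l * l * (K1 * l ^ n + K2 * wseq l n)"
      using Suc.IH s p by simp
    also have "\<dots> = K1 * l ^ Suc (Suc n) + K2 * wseq l (Suc (Suc n))"
      by (simp add: wseq_rec algebra_simps)
    finally show ?case using Suc.IH by simp
  qed
  then show ?thesis unfolding K1_def K2_def by simp
qed

lemma rec_v:
  fixes c :: "nat \<Rightarrow> real"
  assumes a: "0 < \<alpha>" "\<alpha> < 1" and b: "\<beta> > 0"
    and rec: "\<And>n. c (Suc (Suc n)) * Cg \<alpha> \<beta> (Suc (Suc n)) * Cg \<alpha> \<beta> (Suc n) + A * (c (Suc n) * Cg \<alpha> \<beta> (Suc n)) + B * c n = 0"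
  shows "c (Suc (Suc n)) / ksr \<alpha> \<beta> (Suc (Suc n)) + A * (c (Suc n) / ksr \<alpha> \<beta> (Suc n)) + B * (c n / ksr \<alpha> \<beta> n) = 0"
proof -
  have kp: "ksr \<alpha> \<beta> n > 0" unfolding ksr_def using Cg_pos[OF a b] by (simp add: prod_pos)
  have c1: "Cg \<alpha> \<beta> (Suc n) > 0" "Cg \<alpha> \<beta> (Suc (Suc n)) > 0" using Cg_pos[OF a b] by auto
  have "c (Suc (Suc n)) / ksr \<alpha> \<beta> (Suc (Suc n)) + A * (c (Suc n) / ksr \<alpha> \<beta> (Suc n)) + B * (c n / ksr \<alpha> \<beta> n)
      = (c (Suc (Suc n)) * Cg \<alpha> \<beta> (Suc (Suc n)) * Cg \<alpha> \<beta> (Suc n) + A * (c (Suc n) * Cg \<alpha> \<beta> (Suc n)) + B * c n) / ksr \<alpha> \<beta> n"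
    using kp c1 by (simp add: ksr_Suc field_simps)
  then show ?thesis using rec[of n] by simp
qed

lemma ksr_pos:
  assumes a: "0 < \<alpha>" "\<alpha> < 1" and b: "\<beta> > 0"
  shows "ksr \<alpha> \<beta> n > 0"
  unfolding ksr_def using Cg_pos[OF a b] by (simp add: prod_pos)



definition Ek :: "real \<Rightarrow> real \<Rightarrow> complex \<Rightarrow> complex" where
  "Ek \<alpha> \<beta> z = (\<Sum>n. complex_of_real (ksr \<alpha> \<beta> n) * z ^ n)"

lemma Ek_sums:
  assumes a: "0 < \<alpha>" "\<alpha> < 1" and b: "\<beta> > 0"
  shows "(\<lambda>n. complex_of_real (ksr \<alpha> \<beta> n) * z ^ n) sums Ek \<alpha> \<beta> z"
  unfolding Ek_def by (rule summable_sums[OF ksr_entire[OF a b]])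

lemma Ek_deriv:
  assumes a: "0 < \<alpha>" "\<alpha> < 1" and b: "\<beta> > 0"
  shows "(\<lambda>n. diffs (\<lambda>n. complex_of_real (ksr \<alpha> \<beta> n)) n * z ^ n) sums deriv (Ek \<alpha> \<beta>) z"
proof -
  have "(Ek \<alpha> \<beta> has_field_derivative (\<Sum>n. diffs (\<lambda>n. complex_of_real (ksr \<alpha> \<beta> n)) n * z ^ n)) (at z)"
    unfolding Ek_def[abs_def] by (rule termdiffs_strong_converges_everywhere[OF ksr_entire[OF a b]])
  then have "deriv (Ek \<alpha> \<beta>) z = (\<Sum>n. diffs (\<lambda>n. complex_of_real (ksr \<alpha> \<beta> n)) n * z ^ n)"
    by (rule DERIV_imp_deriv)
  moreover have "summable (\<lambda>n. diffs (\<lambda>n. complex_of_real (ksr \<alpha> \<beta> n)) n * z ^ n)"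
    by (rule termdiff_converges_all[OF ksr_entire[OF a b]])
  ultimately show ?thesis by (simp add: summable_sums)
qed

lemma assemble_distinct:
  fixes fc :: "nat \<Rightarrow> real" and K1 K2 l1 l2 :: complex
  assumes a: "0 < \<alpha>" "\<alpha> < 1" and b: "\<beta> > 0"
    and F: "(\<lambda>n. fc n * X ^ n) sums F"
    and co: "\<And>n. complex_of_real (fc n) = K1 * complex_of_real (ksr \<alpha> \<beta> n) * l1 ^ n + K2 * complex_of_real (ksr \<alpha> \<beta> n) * l2 ^ n"
  shows "complex_of_real F = K1 * Ek \<alpha> \<beta> (l1 * complex_of_real X) + K2 * Ek \<alpha> \<beta> (l2 * complex_of_real X)"
proof -
  have s: "(\<lambda>n. K1 * (complex_of_real (ksr \<alpha> \<beta> n) * (l1 * complex_of_real X) ^ n) + K2 * (complex_of_real (ksr \<alpha> \<beta> n) * (l2 * complex_of_real X) ^ n))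
      sums (K1 * Ek \<alpha> \<beta> (l1 * complex_of_real X) + K2 * Ek \<alpha> \<beta> (l2 * complex_of_real X))"
    by (intro sums_add sums_mult Ek_sums a b)
  have "K1 * (complex_of_real (ksr \<alpha> \<beta> n) * (l1 * complex_of_real X) ^ n) + K2 * (complex_of_real (ksr \<alpha> \<beta> n) * (l2 * complex_of_real X) ^ n)
     = complex_of_real (fc n * X ^ n)" for n
    using co[of n] by (simp add: power_mult_distrib algebra_simps)
  with s have "(\<lambda>n. complex_of_real (fc n * X ^ n)) sums (K1 * Ek \<alpha> \<beta> (l1 * complex_of_real X) + K2 * Ek \<alpha> \<beta> (l2 * complex_of_real X))"
    by simp
  moreover have "(\<lambda>n. complex_of_real (fc n * X ^ n)) sums complex_of_real F"
    using F by (rule sums_of_real)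
  ultimately show ?thesis by (metis sums_unique2)
qed

lemma assemble_double:
  fixes fc :: "nat \<Rightarrow> real" and K1 K2 l :: complex
  assumes a: "0 < \<alpha>" "\<alpha> < 1" and b: "\<beta> > 0"
    and F: "(\<lambda>n. fc n * X ^ n) sums F"
    and co: "\<And>n. complex_of_real (fc n) = K1 * complex_of_real (ksr \<alpha> \<beta> n) * l ^ n + K2 * complex_of_real (ksr \<alpha> \<beta> n) * wseq l n"
  shows "complex_of_real F = K1 * Ek \<alpha> \<beta> (l * complex_of_real X) + K2 * complex_of_real X * deriv (Ek \<alpha> \<beta>) (l * complex_of_real X)"
proof -
  define g where "g = (\<lambda>n. complex_of_real (ksr \<alpha> \<beta> n) * wseq l n * complex_of_real X ^ n)"
  have "(\<lambda>m. complex_of_real X * (diffs (\<lambda>n. complex_of_real (ksr \<alpha> \<beta> n)) m * (l * complex_of_real X) ^ m))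
      sums (complex_of_real X * deriv (Ek \<alpha> \<beta>) (l * complex_of_real X))"
    by (intro sums_mult Ek_deriv a b)
  moreover have "complex_of_real X * (diffs (\<lambda>n. complex_of_real (ksr \<alpha> \<beta> n)) m * (l * complex_of_real X) ^ m) = g (Suc m)" for m
    unfolding g_def diffs_def wseq_def by (simp add: power_mult_distrib algebra_simps)
  ultimately have "(\<lambda>m. g (Suc m)) sums (complex_of_real X * deriv (Ek \<alpha> \<beta>) (l * complex_of_real X))" by simp
  then have gs: "g sums (complex_of_real X * deriv (Ek \<alpha> \<beta>) (l * complex_of_real X))"
    by (subst (asm) sums_Suc_iff) (simp add: g_def wseq_def)
  have s: "(\<lambda>n. K1 * (complex_of_real (ksr \<alpha> \<beta> n) * (l * complex_of_real X) ^ n) + K2 * g n)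
      sums (K1 * Ek \<alpha> \<beta> (l * complex_of_real X) + K2 * (complex_of_real X * deriv (Ek \<alpha> \<beta>) (l * complex_of_real X)))"
    by (intro sums_add sums_mult Ek_sums a b gs)
  have "K1 * (complex_of_real (ksr \<alpha> \<beta> n) * (l * complex_of_real X) ^ n) + K2 * g n
     = complex_of_real (fc n * X ^ n)" for n
    using co[of n] unfolding g_def by (simp add: power_mult_distrib algebra_simps)
  with s have "(\<lambda>n. complex_of_real (fc n * X ^ n)) sums (K1 * Ek \<alpha> \<beta> (l * complex_of_real X) + K2 * (complex_of_real X * deriv (Ek \<alpha> \<beta>) (l * complex_of_real X)))"
    by simp
  moreover have "(\<lambda>n. complex_of_real (fc n * X ^ n)) sums complex_of_real F"
    using F by (rule sums_of_real)
  ultimately show ?thesis by (metis sums_unique2 mult.assoc)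
qed



lemma wseq_of_real: "complex_of_real (wseq r n) = wseq (complex_of_real r) n"
  by (cases n) (simp_all add: wseq_def)

theorem mainTheorem7:
  fixes \<alpha> \<gamma> a b :: real and f :: "real \<Rightarrow> real" and fc :: "nat \<Rightarrow> real"
    and \<eta>1 \<eta>2 :: complex and E E1 :: "complex \<Rightarrow> complex"
  assumes "0 < \<alpha>" "\<alpha> < 1" "\<alpha> + \<gamma> > 0" "a > 0" "b > 0"
    and series: "\<forall>t>0. (\<lambda>n. fc n * (t powr (\<alpha> + \<gamma>)) ^ n) sums f t"
    and ode: "\<forall>t>0. stretched \<alpha> \<gamma> (stretched \<alpha> \<gamma> f) t + a * stretched \<alpha> \<gamma> f t + b * f t = 0"
  defines "\<eta>1 \<equiv> complex_of_real (a / 2) - csqrt (complex_of_real (a\<^sup>2 / 4 - b))"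
    and "\<eta>2 \<equiv> complex_of_real (a / 2) + csqrt (complex_of_real (a\<^sup>2 / 4 - b))"
    and "E \<equiv> kilbas_saigo \<alpha> (1 + \<gamma> / \<alpha>) (\<gamma> / \<alpha>)"
    and "E1 \<equiv> kilbas_saigo_deriv \<alpha> (1 + \<gamma> / \<alpha>) (\<gamma> / \<alpha>)"
  shows "(a\<^sup>2 / 4 > b \<longrightarrow>
            (\<exists>K1 K2 :: real. \<forall>t>0. complex_of_real (f t) =
               complex_of_real K1 * E (- \<eta>1 * complex_of_real (t powr (\<alpha> + \<gamma>)))
             + complex_of_real K2 * E (- \<eta>2 * complex_of_real (t powr (\<alpha> + \<gamma>)))))
       \<and> (a\<^sup>2 / 4 < b \<longrightarrow>
            (\<exists>K1 K2 :: complex. K1 = cnj K2 \<and> (\<forall>t>0. complex_of_real (f t) =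
               K1 * E (- \<eta>1 * complex_of_real (t powr (\<alpha> + \<gamma>)))
             + K2 * E (- \<eta>2 * complex_of_real (t powr (\<alpha> + \<gamma>))))))
       \<and> (b = a\<^sup>2 / 4 \<longrightarrow>
            (\<exists>K1 K2 :: real. \<forall>t>0. complex_of_real (f t) =
               complex_of_real K1 * E (- complex_of_real (a / 2) * complex_of_real (t powr (\<alpha> + \<gamma>)))
             + complex_of_real K2 * complex_of_real (t powr (\<alpha> + \<gamma>))
                 * E1 (- complex_of_real (a / 2) * complex_of_real (t powr (\<alpha> + \<gamma>)))))"
proof -
  note a1 = \<open>0 < \<alpha>\<close> and a2 = \<open>\<alpha> < 1\<close> and g = \<open>\<alpha> + \<gamma> > 0\<close>
  have root: "(x powr (1 / (\<alpha> + \<gamma>))) powr (\<alpha> + \<gamma>) = x" "x powr (1 / (\<alpha> + \<gamma>)) > 0" if "x > 0" for x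
    using that g by (simp_all add: powr_powr)
  have ent: "summable (\<lambda>n. fc n * x ^ n)" for x
  proof (rule entire_from_pos)
    fix y :: real assume y: "y > 0"
    show "summable (\<lambda>n. fc n * y ^ n)"
      using series root[OF y] sums_summable by metis
  qed
  have fdef: "f \<tau> = psum fc (\<tau> powr (\<alpha> + \<gamma>))" if "\<tau> > 0" for \<tau>
    unfolding psum_def using series that sums_unique by metis
  define d where "d = (\<lambda>n. fc (Suc n) * Cg \<alpha> (\<alpha> + \<gamma>) (Suc n))"
  define e where "e = (\<lambda>n. d (Suc n) * Cg \<alpha> (\<alpha> + \<gamma>) (Suc n))"
  have SP1a: "summable (\<lambda>n. d n * x ^ n)" for x
    unfolding d_def using fdef by (rule stretched_psum(1)[OF a1 a2 g ent])
  have SP1b: "stretched \<alpha> \<gamma> f t = psum d (t powr (\<alpha> + \<gamma>))" if "t > 0" for t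
    unfolding d_def using fdef that by (rule stretched_psum(2)[OF a1 a2 g ent])
  have SP2a: "summable (\<lambda>n. e n * x ^ n)" for x
    unfolding e_def using SP1b by (rule stretched_psum(1)[OF a1 a2 g SP1a])
  have SP2b: "stretched \<alpha> \<gamma> (stretched \<alpha> \<gamma> f) t = psum e (t powr (\<alpha> + \<gamma>))" if "t > 0" for t
    unfolding e_def using SP1b that by (rule stretched_psum(2)[OF a1 a2 g SP1a])
  have Z: "psum (\<lambda>n. e n + a * d n + b * fc n) x = 0" if x: "x > 0" for x
  proof -
    define t where "t = x powr (1 / (\<alpha> + \<gamma>))"
    have t: "t > 0" "t powr (\<alpha> + \<gamma>) = x" using root[OF x] by (auto simp: t_def)
    have "(\<lambda>n. e n * x ^ n + a * (d n * x ^ n) + b * (fc n * x ^ n)) sums (psum e x + a * psum d x + b * psum fc x)"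
      unfolding psum_def
      by (intro sums_add sums_mult summable_sums SP1a SP2a ent)
    moreover have "psum e x + a * psum d x + b * psum fc x = 0"
    proof -
      have o: "stretched \<alpha> \<gamma> (stretched \<alpha> \<gamma> f) t + a * stretched \<alpha> \<gamma> f t + b * f t = 0"
        using ode t(1) by blast
      show ?thesis using o unfolding SP1b[OF t(1)] SP2b[OF t(1)] fdef[OF t(1)] t(2) .
    qed
    moreover have "(\<lambda>n. e n * x ^ n + a * (d n * x ^ n) + b * (fc n * x ^ n)) = (\<lambda>n. (e n + a * d n + b * fc n) * x ^ n)"
      by (simp add: fun_eq_iff algebra_simps)
    ultimately show ?thesis unfolding psum_def by (simp add: sums_iff)
  qed
  have sc: "summable (\<lambda>n. (e n + a * d n + b * fc n) * x ^ n)" for x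
  proof -
    have "summable (\<lambda>n. e n * x ^ n + a * (d n * x ^ n) + b * (fc n * x ^ n))"
      by (intro summable_add summable_mult SP1a SP2a ent)
    moreover have "(\<lambda>n. e n * x ^ n + a * (d n * x ^ n) + b * (fc n * x ^ n)) = (\<lambda>n. (e n + a * d n + b * fc n) * x ^ n)"
      by (simp add: fun_eq_iff algebra_simps)
    ultimately show ?thesis by simp
  qed
  have coef: "e n + a * d n + b * fc n = 0" for n
    by (rule powser_unique[OF sc Z])
  define v where "v = (\<lambda>n. fc n / ksr \<alpha> (\<alpha> + \<gamma>) n)"
  have recv: "v (Suc (Suc n)) + a * v (Suc n) + b * v n = 0" for n
    unfolding v_def by (rule rec_v[OF a1 a2 g]) (use coef in \<open>simp add: d_def e_def mult.assoc\<close>)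
  have fcv: "fc n = ksr \<alpha> (\<alpha> + \<gamma>) n * v n" for n
    using ksr_pos[OF a1 a2 g, of n] unfolding v_def by simp
  have Eeq: "E = Ek \<alpha> (\<alpha> + \<gamma>)"
    unfolding E_def kilbas_saigo_def[abs_def] Ek_def[abs_def] ks_coeff_ksr[OF a1] ..
  have E1eq: "E1 = deriv (Ek \<alpha> (\<alpha> + \<gamma>))"
    unfolding E1_def kilbas_saigo_deriv_def[abs_def] kilbas_saigo_def[abs_def] Ek_def[abs_def] ks_coeff_ksr[OF a1] ..
  have ser: "(\<lambda>n. fc n * (t powr (\<alpha> + \<gamma>)) ^ n) sums f t" if "t > 0" for t
    using series that by blast
  show ?thesis
  proof (intro conjI impI)
    assume D: "a\<^sup>2 / 4 > b"
    define s where "s = sqrt (a\<^sup>2 / 4 - b)"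
    have s: "s > 0" "s * s = a\<^sup>2 / 4 - b" using D by (auto simp: s_def)
    have cs: "csqrt (complex_of_real (a\<^sup>2 / 4 - b)) = complex_of_real s"
      unfolding s_def using D by (simp add: csqrt_of_real)
    define r1 where "r1 = s - a / 2"
    define r2 where "r2 = - a / 2 - s"
    have vn: "v n = (v 1 - r2 * v 0) / (r1 - r2) * r1 ^ n + (r1 * v 0 - v 1) / (r1 - r2) * r2 ^ n" for n
      by (rule lin_rec_distinct[where v=v and A=a and B=b, OF recv]) (use s in \<open>auto simp: r1_def r2_def power2_eq_square algebra_simps\<close>)
    show "\<exists>K1 K2 :: real. \<forall>t>0. complex_of_real (f t) =
               complex_of_real K1 * E (- \<eta>1 * complex_of_real (t powr (\<alpha> + \<gamma>)))
             + complex_of_real K2 * E (- \<eta>2 * complex_of_real (t powr (\<alpha> + \<gamma>)))"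
    proof (intro exI allI impI)
      fix t :: real assume t: "t > 0"
      have e1: "- \<eta>1 = complex_of_real r1" "- \<eta>2 = complex_of_real r2"
        unfolding \<eta>1_def \<eta>2_def cs r1_def r2_def by simp_all
      show "complex_of_real (f t) =
               complex_of_real ((v 1 - r2 * v 0) / (r1 - r2)) * E (- \<eta>1 * complex_of_real (t powr (\<alpha> + \<gamma>)))
             + complex_of_real ((r1 * v 0 - v 1) / (r1 - r2)) * E (- \<eta>2 * complex_of_real (t powr (\<alpha> + \<gamma>)))"
        unfolding e1 Eeq
        by (rule assemble_distinct[OF a1 a2 g ser[OF t]])
           (subst fcv, subst vn, simp add: algebra_simps)
    qed
  next
    assume D: "a\<^sup>2 / 4 < b"
    define s where "s = sqrt (b - a\<^sup>2 / 4)"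
    have s: "s > 0" "s * s = b - a\<^sup>2 / 4" using D by (auto simp: s_def)
    have cs: "csqrt (complex_of_real (a\<^sup>2 / 4 - b)) = \<i> * complex_of_real s"
      unfolding s_def using D by (simp add: abs_if)
    define l1 where "l1 = - \<eta>1"
    define l2 where "l2 = - \<eta>2"
    have l1: "l1 = complex_of_real (- a / 2) + \<i> * complex_of_real s"
      unfolding l1_def \<eta>1_def cs by simp
    have l2: "l2 = complex_of_real (- a / 2) - \<i> * complex_of_real s"
      unfolding l2_def \<eta>2_def cs by simp
    have cl: "cnj l1 = l2" "cnj l2 = l1" unfolding l1 l2 by simp_all
    have dl: "l1 - l2 \<noteq> 0" unfolding l1 l2 using s by (simp add: complex_eq_iff)
    define V where "V = (\<lambda>n. complex_of_real (v n))"
    have recV: "V (Suc (Suc n)) + complex_of_real a * V (Suc n) + complex_of_real b * V n = 0" for n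
      unfolding V_def using recv[of n] by (metis of_real_add of_real_mult of_real_0)
    have sum: "l1 + l2 = - complex_of_real a" unfolding l1 l2 by simp
    have prod: "l1 * l2 = complex_of_real b"
    proof -
      have "l1 * l2 = complex_of_real (a * a / 4 + s * s)"
        unfolding l1 l2 by (simp add: algebra_simps complex_eq_iff)
      then show ?thesis using s by (simp add: power2_eq_square)
    qed
    have Vn: "V n = (V 1 - l2 * V 0) / (l1 - l2) * l1 ^ n + (l1 * V 0 - V 1) / (l1 - l2) * l2 ^ n" for n
      by (rule lin_rec_distinct[where v=V and A="complex_of_real a" and B="complex_of_real b", OF recV sum prod]) (use dl in simp)
    define K1 where "K1 = (V 1 - l2 * V 0) / (l1 - l2)"
    define K2 where "K2 = (l1 * V 0 - V 1) / (l1 - l2)"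
    have cK: "K1 = cnj K2"
    proof -
      have "cnj K2 = (l2 * V 0 - V 1) / (l2 - l1)"
        unfolding K2_def V_def by (simp add: cl)
      also have "\<dots> = (-(V 1 - l2 * V 0)) / (-(l1 - l2))"
        by (simp only: minus_diff_eq)
      also have "\<dots> = K1" unfolding K1_def by (rule minus_divide_divide)
      finally show ?thesis by simp
    qed
    show "\<exists>K1 K2 :: complex. K1 = cnj K2 \<and> (\<forall>t>0. complex_of_real (f t) =
               K1 * E (- \<eta>1 * complex_of_real (t powr (\<alpha> + \<gamma>)))
             + K2 * E (- \<eta>2 * complex_of_real (t powr (\<alpha> + \<gamma>))))"
    proof (intro exI conjI allI impI)
      show "K1 = cnj K2" by (rule cK)
      fix t :: real assume t: "t > 0"
      show "complex_of_real (f t) =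
               K1 * E (- \<eta>1 * complex_of_real (t powr (\<alpha> + \<gamma>)))
             + K2 * E (- \<eta>2 * complex_of_real (t powr (\<alpha> + \<gamma>)))"
        unfolding l1_def[symmetric] l2_def[symmetric] Eeq
      proof (rule assemble_distinct[OF a1 a2 g ser[OF t]])
        fix n
        have "complex_of_real (fc n) = complex_of_real (ksr \<alpha> (\<alpha> + \<gamma>) n) * V n"
          unfolding V_def by (subst fcv) simp
        also have "\<dots> = K1 * complex_of_real (ksr \<alpha> (\<alpha> + \<gamma>) n) * l1 ^ n + K2 * complex_of_real (ksr \<alpha> (\<alpha> + \<gamma>) n) * l2 ^ n"
          unfolding K1_def K2_def by (subst Vn) (simp add: algebra_simps)
        finally show "complex_of_real (fc n) = K1 * complex_of_real (ksr \<alpha> (\<alpha> + \<gamma>) n) * l1 ^ n + K2 * complex_of_real (ksr \<alpha> (\<alpha> + \<gamma>) n) * l2 ^ n" .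
      qed
    qed
  next
    assume D: "b = a\<^sup>2 / 4"
    define r where "r = - a / 2"
    have vn: "v n = v 0 * r ^ n + (v 1 - r * v 0) * wseq r n" for n
      by (rule lin_rec_double[where v=v and A=a and B=b, OF recv]) (use D in \<open>auto simp: r_def power2_eq_square\<close>)
    show "\<exists>K1 K2 :: real. \<forall>t>0. complex_of_real (f t) =
               complex_of_real K1 * E (- complex_of_real (a / 2) * complex_of_real (t powr (\<alpha> + \<gamma>)))
             + complex_of_real K2 * complex_of_real (t powr (\<alpha> + \<gamma>))
                 * E1 (- complex_of_real (a / 2) * complex_of_real (t powr (\<alpha> + \<gamma>)))"
    proof (intro exI allI impI)
      fix t :: real assume t: "t > 0"
      have e1: "- complex_of_real (a / 2) = complex_of_real r" unfolding r_def by simp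
      show "complex_of_real (f t) =
               complex_of_real (v 0) * E (- complex_of_real (a / 2) * complex_of_real (t powr (\<alpha> + \<gamma>)))
             + complex_of_real (v 1 - r * v 0) * complex_of_real (t powr (\<alpha> + \<gamma>))
                 * E1 (- complex_of_real (a / 2) * complex_of_real (t powr (\<alpha> + \<gamma>)))"
        unfolding e1 Eeq E1eq
      proof (rule assemble_double[OF a1 a2 g ser[OF t]])
        fix n
        show "complex_of_real (fc n) = complex_of_real (v 0) * complex_of_real (ksr \<alpha> (\<alpha> + \<gamma>) n) * complex_of_real r ^ n
            + complex_of_real (v 1 - r * v 0) * complex_of_real (ksr \<alpha> (\<alpha> + \<gamma>) n) * wseq (complex_of_real r) n"
          by (subst fcv, subst vn) (simp add: wseq_of_real[symmetric] algebra_simps)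
      qed
    qed
  qed
qed


end
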